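(* Let $d\ge1$ and let $V,W:\mathbb{R}^d\to\mathbb{R}$ satisfy the hypotheses (H) stated in the context. There exist constants $C_W,C_\Pi>0$, independent of $\sigma$, such that for all $\mu\in\mathcal{P}(\mathbb{R}^d;P)$, the measure $\Pi(\mu)(\cdot+c_\mu)$ belongs to $K^0_{C_W,C_\Pi}$, where $c_\mu\in\mathbb{R}^d$ is defined by $(\nabla V+\nabla W*\mu)(c_\mu)=0$.
   Context: Hypotheses (H): (i) $V,W\in\mathcal{C}^2(\mathbb{R}^d)$, $V\ge0$, $W\ge0$. (ii) There is a polynomial $P$ with $P(|x|)\ge1$ such that for all $x$, $|W(x)|+|\nabla W(x)|+\|\nabla^2W(x)\|+|V(x)|+|\nabla V(x)|+\|\nabla^2V(x)\|\le P(|x|)$; moreover $\nabla^2V\ge\rho>0$ and $\nabla^2W\ge\alpha>0$ everywhere, $\Delta V(x)\le aV(x)$ for some constant $a$, and $|\nabla V(x)|^2/V(x)\to\infty$ as $|x|\to\infty$. (iii) $V$ has a unique minimum at a point $m$. (iv) $W(x)=G(|x|)$ for some $G:\mathbb{R}_+\to\mathbb{R}$. Notation: $\mathcal{P}(\mathbb{R}^d;P)$ is the set of Borel probability measures $\mu$ on $\mathbb{R}^d$ with $\int P(|y|)\,\mu(\mathrm{d}y)<\infty$. For $\sigma>0$ (the noise parameter, considered small, $\sigma^2\ll1$), $\Pi(\mu)$ is the probability measure with density $Z(\mu,\sigma)^{-1}e^{-2(V+W*\mu)(x)/\sigma^2}$, where $Z(\mu,\sigma)=\int e^{-2(V+W*\mu)(x)/\sigma^2}\,\mathrm{d}x$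 and $W*\mu(x)=\int W(x-y)\mu(\mathrm{d}y)$. For $\alpha,C>0$, $K^0_{\alpha,C}$ is the set of probability measures $\nu$ on $\mathbb{R}^d$ such that $\nu(\{y:|y|>R\})<Ce^{-\alpha R}$ for all $R>0$. *)

theory Defs
  imports "HOL-Analysis.Analysis" "HOL-Probability.Probability"
          "HOL-Computational_Algebra.Polynomial"
begin

definition grad :: "('a::euclidean_space \<Rightarrow> real) \<Rightarrow> 'a \<Rightarrow> 'a" where
  "grad f x = (\<Sum>b\<in>Basis. frechet_derivative f (at x) b *\<^sub>R b)"

definition hess :: "('a::euclidean_space \<Rightarrow> real) \<Rightarrow> 'a \<Rightarrow> 'a \<Rightarrow> 'a" where
  "hess f x = frechet_derivative (grad f) (at x)"

definition laplacian :: "('a::euclidean_space \<Rightarrow> real) \<Rightarrow> 'a \<Rightarrow> real" where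
  "laplacian f x = (\<Sum>b\<in>Basis. hess f x b \<bullet> b)"

definition C2 :: "('a::euclidean_space \<Rightarrow> real) \<Rightarrow> bool" where
  "C2 f \<longleftrightarrow> (\<forall>x. f differentiable (at x)) \<and> (\<forall>x. grad f differentiable (at x))
     \<and> (\<forall>u v. continuous_on UNIV (\<lambda>x. hess f x u \<bullet> v))"

definition conv :: "('a::euclidean_space \<Rightarrow> real) \<Rightarrow> 'a measure \<Rightarrow> 'a \<Rightarrow> real" where
  "conv W \<mu> x = (\<integral>y. W (x - y) \<partial>\<mu>)"

definition grad_conv :: "('a::euclidean_space \<Rightarrow> real) \<Rightarrow> 'a measure \<Rightarrow> 'a \<Rightarrow> 'a" where
  "grad_conv W \<mu> x = (\<integral>y. grad W (x - y) \<partial>\<mu>)"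

definition gibbs_weight ::
  "('a::euclidean_space \<Rightarrow> real) \<Rightarrow> ('a \<Rightarrow> real) \<Rightarrow> real \<Rightarrow> 'a measure \<Rightarrow> 'a \<Rightarrow> real" where
  "gibbs_weight V W \<sigma> \<mu> x = exp (- 2 * (V x + conv W \<mu> x) / \<sigma>\<^sup>2)"

definition Zpart ::
  "('a::euclidean_space \<Rightarrow> real) \<Rightarrow> ('a \<Rightarrow> real) \<Rightarrow> real \<Rightarrow> 'a measure \<Rightarrow> real" where
  "Zpart V W \<sigma> \<mu> = (\<integral>x. gibbs_weight V W \<sigma> \<mu> x \<partial>lborel)"

definition PiM ::
  "('a::euclidean_space \<Rightarrow> real) \<Rightarrow> ('a \<Rightarrow> real) \<Rightarrow> real \<Rightarrow> 'a measure \<Rightarrow> 'a measure" where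
  "PiM V W \<sigma> \<mu> = density lborel (\<lambda>x. ennreal (gibbs_weight V W \<sigma> \<mu> x / Zpart V W \<sigma> \<mu>))"

text \<open>The translated measure \<open>\<nu>(\<cdot>) = \<Pi>(\<mu>)(\<cdot> + c)\<close>: \<open>\<nu>(A) = \<Pi>(\<mu>)(A + c)\<close>.\<close>
definition shift_measure :: "'a::euclidean_space measure \<Rightarrow> 'a \<Rightarrow> 'a measure" where
  "shift_measure M c = distr M borel (\<lambda>x. x - c)"

definition PP :: "real poly \<Rightarrow> 'a::euclidean_space measure set" where
  "PP P = {\<mu>. prob_space \<mu> \<and> sets \<mu> = sets borel \<and> integrable \<mu> (\<lambda>y. poly P (norm y))}"

definition K0 :: "real \<Rightarrow> real \<Rightarrow> 'a::euclidean_space measure set" where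
  "K0 \<alpha> C = {\<nu>. prob_space \<nu> \<and> sets \<nu> = sets borel \<and>
      (\<forall>R>0. measure \<nu> {y. norm y > R} < C * exp (- \<alpha> * R))}"

end

theory Submission
  imports Defs
begin


lemma taylor2:
  fixes f f' f'' :: "real \<Rightarrow> real"
  assumes d1: "\<And>t. (f has_real_derivative f' t) (at t)"
    and d2: "\<And>t. (f' has_real_derivative f'' t) (at t)"
    and k: "\<And>t. f'' t \<ge> k"
  shows "f 1 \<ge> f 0 + f' 0 + k/2" and "f 2 - f 1 \<ge> f' 0 + 3/2*k"
proof -
  define q where "q t = f t - f 0 - f' 0 * t - k*t^2/2" for t
  define q' where "q' t = f' t - f' 0 - k*t" for t
  have dq: "(q has_real_derivative q' t) (at t)" for t
    unfolding q_def q'_def by (auto intro!: derivative_eq_intros d1)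
  have dq': "(q' has_real_derivative (f'' t - k)) (at t)" for t
    unfolding q'_def by (auto intro!: derivative_eq_intros d2)
  have q'nn: "q' t \<ge> 0" if "t \<ge> 0" for t
  proof -
    have "q' 0 \<le> q' t"
      by (rule DERIV_nonneg_imp_nondecreasing[OF that]) (use dq' k in force)
    then show ?thesis by (simp add: q'_def)
  qed
  have mono: "q a \<le> q b" if "0 \<le> a" "a \<le> b" for a b
    by (rule DERIV_nonneg_imp_nondecreasing[OF that(2)]) (use dq q'nn that in force)
  have "q 0 \<le> q 1" by (rule mono) auto
  then show "f 1 \<ge> f 0 + f' 0 + k/2" by (simp add: q_def)
  have "q 1 \<le> q 2" by (rule mono) auto
  then show "f 2 - f 1 \<ge> f' 0 + 3/2*k" by (simp add: q_def power2_eq_square)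
qed

lemma grad_has_derivative:
  fixes f :: "'a::euclidean_space \<Rightarrow> real"
  assumes "f differentiable (at y)"
  shows "(f has_derivative (\<lambda>h. grad f y \<bullet> h)) (at y)"
proof -
  let ?D = "frechet_derivative f (at y)"
  have D: "(f has_derivative ?D) (at y)" using assms frechet_derivative_works by blast
  then have lin: "linear ?D" using has_derivative_linear by blast
  have "?D h = grad f y \<bullet> h" for h
  proof -
    have "?D h = ?D (\<Sum>b\<in>Basis. (h \<bullet> b) *\<^sub>R b)" by (simp add: euclidean_representation)
    also have "\<dots> = (\<Sum>b\<in>Basis. (h \<bullet> b) * ?D b)"
      by (simp add: linear_sum[OF lin] linear_scale[OF lin])
    also have "\<dots> = grad f y \<bullet> h"
      by (auto simp: grad_def inner_sum_right inner_commute intro!: sum.cong)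
    finally show ?thesis .
  qed
  then have "?D = (\<lambda>h. grad f y \<bullet> h)" by auto
  with D show ?thesis by simp
qed

lemma line_derivs:
  fixes f :: "'a::euclidean_space \<Rightarrow> real"
  assumes d1: "\<forall>x. f differentiable (at x)" and d2: "\<forall>x. grad f differentiable (at x)"
  shows "((\<lambda>t. f (x + t *\<^sub>R z)) has_real_derivative (grad f (x + t *\<^sub>R z) \<bullet> z)) (at t)"
    and "((\<lambda>t. grad f (x + t *\<^sub>R z) \<bullet> z) has_real_derivative (hess f (x + t *\<^sub>R z) z \<bullet> z)) (at t)"
proof -
  let ?y = "x + t *\<^sub>R z"
  have L: "((\<lambda>t. x + t *\<^sub>R z) has_derivative (\<lambda>s. s *\<^sub>R z)) (at t)"
    by (auto intro!: derivative_eq_intros)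
  have "((\<lambda>t. f (x + t *\<^sub>R z)) has_derivative (\<lambda>s. grad f ?y \<bullet> (s *\<^sub>R z))) (at t)"
    using has_derivative_compose[OF L grad_has_derivative[OF d1[rule_format]]] .
  then show "((\<lambda>t. f (x + t *\<^sub>R z)) has_real_derivative (grad f ?y \<bullet> z)) (at t)"
    unfolding has_field_derivative_def by (rule has_derivative_eq_rhs) (auto simp: mult.commute)
  have H: "(grad f has_derivative hess f ?y) (at ?y)"
    unfolding hess_def using d2 frechet_derivative_works by blast
  then have lin: "linear (hess f ?y)" using has_derivative_linear by blast
  have "((\<lambda>t. grad f (x + t *\<^sub>R z)) has_derivative (\<lambda>s. hess f ?y (s *\<^sub>R z))) (at t)"
    using has_derivative_compose[OF L H] .
  then have "((\<lambda>t. grad f (x + t *\<^sub>R z) \<bullet> z) has_derivative (\<lambda>s. hess f ?y (s *\<^sub>R z) \<bullet> z)) (at t)"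
    by (auto intro!: derivative_eq_intros)
  then show "((\<lambda>t. grad f (x + t *\<^sub>R z) \<bullet> z) has_real_derivative (hess f ?y z \<bullet> z)) (at t)"
    unfolding has_field_derivative_def by (rule has_derivative_eq_rhs) (auto simp: linear_scale[OF lin] mult.commute)
qed

lemma convex_ineqs:
  fixes f :: "'a::euclidean_space \<Rightarrow> real"
  assumes d1: "\<forall>x. f differentiable (at x)" and d2: "\<forall>x. grad f differentiable (at x)"
    and hk: "\<forall>y v. hess f y v \<bullet> v \<ge> k * (norm v)\<^sup>2"
  shows "f (x + z) \<ge> f x + grad f x \<bullet> z + k/2 * (norm z)\<^sup>2"
    and "f (x + 2 *\<^sub>R z) - f (x + z) \<ge> grad f x \<bullet> z + 3/2 * k * (norm z)\<^sup>2"
proof -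
  note T = taylor2[where f="\<lambda>t. f (x + t *\<^sub>R z)" and f'="\<lambda>t. grad f (x + t *\<^sub>R z) \<bullet> z"
      and f''="\<lambda>t. hess f (x + t *\<^sub>R z) z \<bullet> z" and k="k * (norm z)\<^sup>2",
      OF line_derivs(1)[OF d1 d2] line_derivs(2)[OF d1 d2] hk[rule_format]]
  from T(1) show "f (x + z) \<ge> f x + grad f x \<bullet> z + k/2 * (norm z)\<^sup>2" by simp
  from T(2) show "f (x + 2 *\<^sub>R z) - f (x + z) \<ge> grad f x \<bullet> z + 3/2 * k * (norm z)\<^sup>2" by simp
qed



lemma poly_upper:
  fixes P :: "real poly"
  assumes "t \<ge> 0"
  shows "\<bar>poly P t\<bar> \<le> (\<Sum>i\<le>degree P. \<bar>coeff P i\<bar>) * (1 + t ^ degree P)"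
proof -
  have "\<bar>poly P t\<bar> = \<bar>\<Sum>i\<le>degree P. coeff P i * t ^ i\<bar>" by (simp add: poly_altdef)
  also have "\<dots> \<le> (\<Sum>i\<le>degree P. \<bar>coeff P i * t ^ i\<bar>)" by (rule sum_abs)
  also have "\<dots> \<le> (\<Sum>i\<le>degree P. \<bar>coeff P i\<bar> * (1 + t ^ degree P))"
  proof (rule sum_mono)
    fix i assume i: "i \<in> {..degree P}"
    have "t ^ i \<le> 1 + t ^ degree P"
    proof (cases "t \<le> 1")
      case True
      then have "t ^ i \<le> 1" using assms by (simp add: power_le_one)
      then show ?thesis using assms by (smt (verit) zero_le_power)
    next
      case False
      then have "t ^ i \<le> t ^ degree P" using i by (intro power_increasing) auto
      then show ?thesis by simp
    qed
    then show "\<bar>coeff P i * t ^ i\<bar> \<le> \<bar>coeff P i\<bar> * (1 + t ^ degree P)"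
      using assms by (simp add: abs_mult mult_left_mono)
  qed
  also have "\<dots> = (\<Sum>i\<le>degree P. \<bar>coeff P i\<bar>) * (1 + t ^ degree P)"
    by (simp add: sum_distrib_right)
  finally show ?thesis .
qed

lemma poly_lower:
  fixes P :: "real poly"
  assumes P1: "\<And>r. r \<ge> 0 \<Longrightarrow> poly P r \<ge> 1"
  shows "\<exists>B. \<forall>r\<ge>0. r ^ degree P \<le> B * poly P r"
proof (cases "degree P = 0")
  case True
  then show ?thesis using P1 by (intro exI[of _ 1]) auto
next
  case False
  let ?n = "degree P" and ?lc = "lead_coeff P"
  have lim: "((\<lambda>x. poly P x / x ^ ?n) \<longlongrightarrow> ?lc) at_top"
    using poly_divide_tendsto_aux[of P] filterlim_mono at_top_le_at_infinity by blast
  have ev: "eventually (\<lambda>x. poly P x / x ^ ?n \<ge> 0) at_top"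
    using eventually_ge_at_top[of "0::real"] by eventually_elim (use P1 in \<open>force\<close>)
  have "?lc \<ge> 0" using tendsto_lowerbound[OF lim ev] by simp
  moreover have "P \<noteq> 0" using P1[of 0] by auto
  ultimately have lc: "?lc > 0" by (simp add: order_less_le)
  have "eventually (\<lambda>x. poly P x / x ^ ?n > ?lc / 2) at_top"
    using order_tendstoD(1)[OF lim, of "?lc/2"] lc by simp
  then obtain R0 where R0: "\<And>x. x \<ge> R0 \<Longrightarrow> poly P x / x ^ ?n > ?lc / 2"
    by (auto simp: eventually_at_top_linorder)
  define M where "M = max R0 1"
  show ?thesis
  proof (intro exI[of _ "2 / ?lc + M ^ ?n"] allI impI)
    fix r :: real assume r: "r \<ge> 0"
    have Pr: "poly P r \<ge> 1" using P1 r by simp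
    show "r ^ ?n \<le> (2 / ?lc + M ^ ?n) * poly P r"
    proof (cases "r \<ge> M")
      case True
      then have "r > 0" "r \<ge> R0" by (auto simp: M_def)
      then have "poly P r / r ^ ?n > ?lc / 2" using R0 by blast
      then have "?lc / 2 * r ^ ?n < poly P r" using \<open>r > 0\<close> by (simp add: field_simps)
      then have "r ^ ?n \<le> 2 / ?lc * poly P r" using lc by (simp add: field_simps)
      moreover have "0 \<le> M ^ ?n * poly P r" using Pr by (simp add: M_def)
      ultimately show ?thesis by (simp add: distrib_right)
    next
      case False
      then have "r ^ ?n \<le> M ^ ?n" using r by (intro power_mono) auto
      also have "\<dots> \<le> M ^ ?n * poly P r" using Pr by (simp add: M_def)
      finally have "r ^ ?n \<le> M ^ ?n * poly P r" .
      moreover have "0 \<le> 2 / ?lc * poly P r" using Pr lc by simp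
      ultimately show ?thesis by (simp add: distrib_right)
    qed
  qed
qed

lemma poly_shift_bound:
  fixes P :: "real poly"
  assumes P1: "\<And>r. r \<ge> 0 \<Longrightarrow> poly P r \<ge> 1" and a: "a \<ge> 0"
  shows "\<exists>K. \<forall>r t. 0 \<le> r \<longrightarrow> 0 \<le> t \<longrightarrow> t \<le> r + a \<longrightarrow> \<bar>poly P t\<bar> \<le> K * poly P r"
proof -
  let ?n = "degree P"
  define A where "A = (\<Sum>i\<le>degree P. \<bar>coeff P i\<bar>)"
  have A0: "A \<ge> 0" by (simp add: A_def sum_nonneg)
  obtain B where B: "\<And>r. r \<ge> 0 \<Longrightarrow> r ^ ?n \<le> B * poly P r" using poly_lower[OF P1] by blast
  show ?thesis
  proof (intro exI[of _ "A * (1 + 2 ^ ?n * a ^ ?n) + A * 2 ^ ?n * B"] allI impI)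
    fix r t :: real assume r: "0 \<le> r" and t: "0 \<le> t" and tr: "t \<le> r + a"
    have Pr: "poly P r \<ge> 1" using P1 r by simp
    have "t ^ ?n \<le> (r + a) ^ ?n" using t tr by (intro power_mono) auto
    also have "\<dots> \<le> (2 * max r a) ^ ?n" using r a by (intro power_mono) auto
    also have "\<dots> = 2 ^ ?n * max r a ^ ?n" by (simp add: power_mult_distrib)
    also have "\<dots> \<le> 2 ^ ?n * (r ^ ?n + a ^ ?n)"
      using r a by (intro mult_left_mono) (auto simp: max_def)
    finally have tn: "t ^ ?n \<le> 2 ^ ?n * (r ^ ?n + a ^ ?n)" .
    have "\<bar>poly P t\<bar> \<le> A * (1 + t ^ ?n)" using poly_upper[OF t] by (simp add: A_def)
    also have "\<dots> \<le> A * (1 + 2 ^ ?n * a ^ ?n + 2 ^ ?n * r ^ ?n)"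
      using tn A0 by (intro mult_left_mono) (auto simp: algebra_simps)
    also have "\<dots> \<le> A * ((1 + 2 ^ ?n * a ^ ?n) * poly P r + 2 ^ ?n * (B * poly P r))"
    proof -
      have "1 + 2 ^ ?n * a ^ ?n \<le> (1 + 2 ^ ?n * a ^ ?n) * poly P r"
      proof -
        have "0 \<le> 2 ^ ?n * a ^ ?n" using a by simp
        then show ?thesis using Pr by (simp add: mult_le_cancel_left1)
      qed
      moreover have "2 ^ ?n * r ^ ?n \<le> 2 ^ ?n * (B * poly P r)"
        using B[OF r] by simp
      ultimately show ?thesis using A0 by (intro mult_left_mono add_mono) auto
    qed
    also have "\<dots> = (A * (1 + 2 ^ ?n * a ^ ?n) + A * 2 ^ ?n * B) * poly P r"
      by (simp add: algebra_simps)
    finally show "\<bar>poly P t\<bar> \<le> (A * (1 + 2 ^ ?n * a ^ ?n) + A * 2 ^ ?n * B) * poly P r" .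
  qed
qed



lemma P1_real:
  assumes P1: "\<forall>x::'a::euclidean_space. poly P (norm x) \<ge> 1" and r: "r \<ge> 0"
  shows "poly P r \<ge> 1"
proof -
  let ?b = "SOME i. i \<in> (Basis::'a set)"
  have "norm (r *\<^sub>R ?b) = r" using r SOME_Basis by (simp add: norm_Basis)
  then show ?thesis using P1[rule_format, of "r *\<^sub>R ?b"] by simp
qed

lemma integrable_shift:
  fixes g :: "'a::euclidean_space \<Rightarrow> 'b::{banach, second_countable_topology}"
  assumes mu: "\<mu> \<in> PP P" and P1: "\<forall>x::'a. poly P (norm x) \<ge> 1"
    and gc: "continuous_on UNIV g" and gb: "\<forall>x. norm (g x) \<le> poly P (norm x)"
  shows "integrable \<mu> (\<lambda>y. g (x - y))"
proof -
  have sets: "sets \<mu> = sets borel" and int: "integrable \<mu> (\<lambda>y. poly P (norm y))"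
    using mu by (auto simp: PP_def)
  obtain K where K: "\<And>r t. 0 \<le> r \<Longrightarrow> 0 \<le> t \<Longrightarrow> t \<le> r + norm x \<Longrightarrow> \<bar>poly P t\<bar> \<le> K * poly P r"
    using poly_shift_bound[of P "norm x"] P1_real[OF P1] by auto
  have meas: "(\<lambda>y. g (x - y)) \<in> borel_measurable \<mu>"
  proof -
    have "(\<lambda>y. g (x - y)) \<in> borel_measurable borel"
      by (intro borel_measurable_continuous_on[OF gc]) measurable
    then show ?thesis by (subst measurable_cong_sets[OF sets refl])
  qed
  show ?thesis
  proof (rule Bochner_Integration.integrable_bound[OF integrable_mult_right[OF int, of K] meas], rule AE_I2)
    fix y
    have "norm (g (x - y)) \<le> poly P (norm (x - y))" using gb by simp
    also have "\<dots> \<le> \<bar>poly P (norm (x - y))\<bar>" by simp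
    also have "\<dots> \<le> K * poly P (norm y)"
      using K[of "norm y" "norm (x - y)"] norm_triangle_ineq4[of x y] by (simp add: add.commute)
    also have "\<dots> \<le> norm (K * poly P (norm y))" by simp
    finally show "norm (g (x - y)) \<le> norm (K * poly P (norm y))" .
  qed
qed

lemma conv_measurable:
  fixes W :: "'a::euclidean_space \<Rightarrow> real"
  assumes mu: "\<mu> \<in> PP P" and Wc: "continuous_on UNIV W"
  shows "conv W \<mu> \<in> borel_measurable borel"
proof -
  have sets: "sets \<mu> = sets borel" and ps: "prob_space \<mu>" using mu by (auto simp: PP_def)
  interpret prob_space \<mu> by (rule ps)
  have Wm[measurable]: "W \<in> borel_measurable borel" using Wc by (rule borel_measurable_continuous_onI)
  have "(\<lambda>(x, y). W (x - y)) \<in> borel_measurable (borel \<Otimes>\<^sub>M (borel::'a measure))"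
    by measurable
  then have "case_prod (\<lambda>x y. W (x - y)) \<in> borel_measurable (borel \<Otimes>\<^sub>M \<mu>)"
    by (subst measurable_cong_sets[OF sets_pair_measure_cong[OF refl sets] refl])
  then have "(\<lambda>x. \<integral>y. W (x - y) \<partial>\<mu>) \<in> borel_measurable borel"
    by (rule borel_measurable_lebesgue_integral)
  then show ?thesis by (simp add: conv_def[abs_def])
qed

lemma conv_ineqs:
  fixes W :: "'a::euclidean_space \<Rightarrow> real"
  assumes mu: "\<mu> \<in> PP P" and P1: "\<forall>x::'a. poly P (norm x) \<ge> 1"
    and d1: "\<forall>x. W differentiable (at x)" and d2: "\<forall>x. grad W differentiable (at x)"
    and hk: "\<forall>y v. hess W y v \<bullet> v \<ge> k * (norm v)\<^sup>2" and k: "k \<ge> 0"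
    and Wb: "\<forall>x. \<bar>W x\<bar> \<le> poly P (norm x)" and gWb: "\<forall>x. norm (grad W x) \<le> poly P (norm x)"
  shows "conv W \<mu> (x + z) \<ge> conv W \<mu> x + grad_conv W \<mu> x \<bullet> z"
    and "conv W \<mu> (x + 2 *\<^sub>R z) - conv W \<mu> (x + z) \<ge> grad_conv W \<mu> x \<bullet> z"
proof -
  have Wc: "continuous_on UNIV W"
    using d1 by (intro differentiable_imp_continuous_on) (simp add: differentiable_at_imp_differentiable_on)
  have gc: "continuous_on UNIV (grad W)"
    using d2 by (intro differentiable_imp_continuous_on) (simp add: differentiable_at_imp_differentiable_on)
  have iW: "integrable \<mu> (\<lambda>y. W (u - y))" for u
    using integrable_shift[OF mu P1 Wc] Wb by simp
  have iG: "integrable \<mu> (\<lambda>y. grad W (u - y))" for u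
    using integrable_shift[OF mu P1 gc] gWb by simp
  have iGz: "integrable \<mu> (\<lambda>y. grad W (x - y) \<bullet> z)" using iG by simp
  have gc_eq: "grad_conv W \<mu> x \<bullet> z = (\<integral>y. grad W (x - y) \<bullet> z \<partial>\<mu>)"
    unfolding grad_conv_def using iG by simp
  note CI = convex_ineqs[OF d1 d2 hk]
  have p1: "W (x - y) + grad W (x - y) \<bullet> z \<le> W (x + z - y)" for y
  proof -
    have "W (x - y) + grad W (x - y) \<bullet> z + k/2 * (norm z)\<^sup>2 \<le> W ((x - y) + z)" by (rule CI(1))
    moreover have "W ((x - y) + z) = W (x + z - y)" by (simp add: algebra_simps)
    moreover have "0 \<le> k/2 * (norm z)\<^sup>2" using k by simp
    ultimately show ?thesis by linarith
  qed
  have p2: "grad W (x - y) \<bullet> z \<le> W (x + 2 *\<^sub>R z - y) - W (x + z - y)" for y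
  proof -
    have "grad W (x - y) \<bullet> z + 3/2 * k * (norm z)\<^sup>2 \<le> W ((x - y) + 2 *\<^sub>R z) - W ((x - y) + z)" by (rule CI(2))
    moreover have "W ((x - y) + z) = W (x + z - y)" "W ((x - y) + 2 *\<^sub>R z) = W (x + 2 *\<^sub>R z - y)" by (simp_all add: algebra_simps)
    moreover have "0 \<le> 3/2 * k * (norm z)\<^sup>2" using k by simp
    ultimately show ?thesis by linarith
  qed
  have "conv W \<mu> x + grad_conv W \<mu> x \<bullet> z = (\<integral>y. W (x - y) + grad W (x - y) \<bullet> z \<partial>\<mu>)"
    unfolding conv_def gc_eq by (rule Bochner_Integration.integral_add[symmetric, OF iW iGz])
  also have "\<dots> \<le> (\<integral>y. W (x + z - y) \<partial>\<mu>)"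
    by (rule Bochner_Integration.integral_mono[OF Bochner_Integration.integrable_add[OF iW iGz] iW p1])
  finally show "conv W \<mu> (x + z) \<ge> conv W \<mu> x + grad_conv W \<mu> x \<bullet> z" by (simp add: conv_def)
  have "grad_conv W \<mu> x \<bullet> z \<le> (\<integral>y. W (x + 2 *\<^sub>R z - y) - W (x + z - y) \<partial>\<mu>)"
    unfolding gc_eq by (rule Bochner_Integration.integral_mono[OF iGz Bochner_Integration.integrable_diff[OF iW iW] p2])
  also have "\<dots> = conv W \<mu> (x + 2 *\<^sub>R z) - conv W \<mu> (x + z)"
    unfolding conv_def by (rule Bochner_Integration.integral_diff[OF iW iW])
  finally show "conv W \<mu> (x + 2 *\<^sub>R z) - conv W \<mu> (x + z) \<ge> grad_conv W \<mu> x \<bullet> z" .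
qed



lemma gauss_integrable:
  "integrable lborel (\<lambda>x::'a::euclidean_space. exp (- (norm x)\<^sup>2 / 2))"
proof -
  define G where "G x = (\<Prod>b\<in>Basis. std_normal_density (x \<bullet> b))" for x :: 'a
  have G_eq: "G x = exp (- (norm x)\<^sup>2 / 2) / sqrt (2 * pi) ^ DIM('a)" for x
  proof -
    have "(norm x)\<^sup>2 = (\<Sum>b\<in>Basis. (x \<bullet> b)\<^sup>2)"
      unfolding power2_norm_eq_inner by (subst euclidean_inner) (simp add: power2_eq_square)
    then have "exp (- (norm x)\<^sup>2 / 2) = (\<Prod>b\<in>Basis. exp (- (x \<bullet> b)\<^sup>2 / 2))"
      by (simp add: exp_sum[symmetric] sum_negf sum_divide_distrib)
    then show ?thesis
      by (simp add: G_def std_normal_density_def prod_dividef)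
  qed
  have Gm[measurable]: "G \<in> borel_measurable borel" unfolding G_def[abs_def] by measurable
  have std1: "(\<integral>\<^sup>+t. ennreal (std_normal_density t) \<partial>lborel) = 1"
    by (subst nn_integral_eq_integral) auto
  have "(\<integral>\<^sup>+x. ennreal (G x) \<partial>lborel) = (\<integral>\<^sup>+(x::'a). (\<Prod>b\<in>Basis. ennreal (std_normal_density (x \<bullet> b))) \<partial>lborel)"
    unfolding G_def by (subst prod_ennreal) auto
  also have "\<dots> = (\<Prod>b\<in>(Basis::'a set). (\<integral>\<^sup>+t. ennreal (std_normal_density t) \<partial>lborel))"
    by (rule nn_integral_lborel_prod) auto
  also have "\<dots> = 1" by (simp add: std1)
  finally have nn: "(\<integral>\<^sup>+x. ennreal (G x) \<partial>lborel) = 1" .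
  have iG: "integrable lborel G"
  proof (rule integrableI_nonneg)
    show "AE x in lborel. 0 \<le> G x" by (rule AE_I2) (simp add: G_def prod_nonneg)
  qed (auto simp: nn)
  have "integrable lborel (\<lambda>x. sqrt (2 * pi) ^ DIM('a) * G x)"
    using iG by simp
  moreover have "sqrt (2 * pi) ^ DIM('a) * G x = exp (- (norm x)\<^sup>2 / 2)" for x
    by (simp add: G_eq)
  ultimately show ?thesis by simp
qed

lemma integrable_translate:
  fixes f :: "'a::euclidean_space \<Rightarrow> real"
  assumes "integrable lborel f"
  shows "integrable lborel (\<lambda>x. f (x - c))"
proof -
  have fm: "f \<in> borel_measurable borel" using borel_measurable_integrable[OF assms] by simp
  have "integrable (distr lborel borel ((+) (-c))) f" using assms by (simp add: lborel_distr_plus)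
  then have "integrable lborel (\<lambda>x. f (-c + x))"
    by (subst (asm) integrable_distr_eq) (auto simp: fm)
  then show ?thesis by simp
qed

lemma nn_integral_translate:
  fixes f :: "'a::euclidean_space \<Rightarrow> ennreal"
  assumes [measurable]: "f \<in> borel_measurable borel"
  shows "(\<integral>\<^sup>+x. f (c + x) \<partial>lborel) = (\<integral>\<^sup>+x. f x \<partial>lborel)"
proof -
  have "(\<integral>\<^sup>+x. f x \<partial>lborel) = (\<integral>\<^sup>+x. f x \<partial>distr lborel borel ((+) c))"
    by (simp add: lborel_distr_plus)
  also have "\<dots> = (\<integral>\<^sup>+x. f (c + x) \<partial>lborel)"
    by (subst nn_integral_distr) auto
  finally show ?thesis by simp
qed

lemma nn_integral_scale2:
  fixes f :: "'a::euclidean_space \<Rightarrow> ennreal"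
  assumes [measurable]: "f \<in> borel_measurable borel"
  shows "(\<integral>\<^sup>+x. f x \<partial>lborel) = ennreal (2 ^ DIM('a)) * (\<integral>\<^sup>+z. f (c + 2 *\<^sub>R z) \<partial>lborel)"
proof -
  have "(\<integral>\<^sup>+x. f x \<partial>lborel) =
      (\<integral>\<^sup>+x. f x \<partial>density (distr lborel borel (\<lambda>x. c + (2::real) *\<^sub>R x)) (\<lambda>_. \<bar>2::real\<bar> ^ DIM('a)))"
    by (subst lborel_affine[of 2 c, symmetric]) auto
  also have "\<dots> = (\<integral>\<^sup>+z. ennreal (2 ^ DIM('a)) * f (c + 2 *\<^sub>R z) \<partial>lborel)"
    by (subst nn_integral_density) (auto simp: nn_integral_distr)
  also have "\<dots> = ennreal (2 ^ DIM('a)) * (\<integral>\<^sup>+z. f (c + 2 *\<^sub>R z) \<partial>lborel)"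
    by (rule nn_integral_cmult) measurable
  finally show ?thesis .
qed



theorem proposition2p9:
  fixes V W :: "'a::euclidean_space \<Rightarrow> real"
    and P :: "real poly" and \<rho> \<alpha> a :: real and m :: 'a
  assumes C2V: "C2 V" and C2W: "C2 W"
    and Vnn: "\<forall>x. V x \<ge> 0" and Wnn: "\<forall>x. W x \<ge> 0"
    and P1: "\<forall>x::'a. poly P (norm x) \<ge> 1"
    and Pbound: "\<forall>x. \<bar>W x\<bar> + norm (grad W x) + onorm (hess W x)
                    + \<bar>V x\<bar> + norm (grad V x) + onorm (hess V x) \<le> poly P (norm x)"
    and rho: "\<rho> > 0" and hessV: "\<forall>x v. hess V x v \<bullet> v \<ge> \<rho> * (norm v)\<^sup>2"
    and alpha: "\<alpha> > 0" and hessW: "\<forall>x v. hess W x v \<bullet> v \<ge> \<alpha> * (norm v)\<^sup>2"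
    and lapV: "\<forall>x. laplacian V x \<le> a * V x"
    and gradV_inf: "filterlim (\<lambda>x. (norm (grad V x))\<^sup>2 / V x) at_top at_infinity"
    and min: "\<forall>x. x \<noteq> m \<longrightarrow> V m < V x"
    and radial: "\<exists>G :: real \<Rightarrow> real. \<forall>x. W x = G (norm x)"
  shows "\<exists>\<sigma>0 > 0. \<exists>C_W > 0. \<exists>C_Pi > 0. \<forall>\<sigma>. 0 < \<sigma> \<and> \<sigma> \<le> \<sigma>0 \<longrightarrow>
           (\<forall>\<mu> \<in> PP P. \<forall>c. grad V c + grad_conv W \<mu> c = 0 \<longrightarrow>
              shift_measure (PiM V W \<sigma> \<mu>) c \<in> K0 C_W C_Pi)"
proof -
  have dV1: "\<forall>x. V differentiable (at x)" and dV2: "\<forall>x. grad V differentiable (at x)"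
    using C2V by (auto simp: C2_def)
  have dW1: "\<forall>x. W differentiable (at x)" and dW2: "\<forall>x. grad W differentiable (at x)"
    using C2W by (auto simp: C2_def)
  have blW: "bounded_linear (hess W x)" for x
    using dW2 frechet_derivative_works has_derivative_bounded_linear unfolding hess_def by blast
  have blV: "bounded_linear (hess V x)" for x
    using dV2 frechet_derivative_works has_derivative_bounded_linear unfolding hess_def by blast
  have WbA: "\<forall>x. \<bar>W x\<bar> \<le> poly P (norm x)" and gWb: "\<forall>x. norm (grad W x) \<le> poly P (norm x)"
  proof -
    { fix x
      have "onorm (hess W x) \<ge> 0" "onorm (hess V x) \<ge> 0" using blW blV onorm_pos_le by auto
      moreover note Pbound[rule_format, of x]
      moreover have "norm (grad W x) \<ge> 0" "norm (grad V x) \<ge> 0" "\<bar>V x\<bar> \<ge> 0" "\<bar>W x\<bar> \<ge> 0" by auto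
      ultimately have "\<bar>W x\<bar> \<le> poly P (norm x)" "norm (grad W x) \<le> poly P (norm x)" by linarith+ }
    then show "\<forall>x. \<bar>W x\<bar> \<le> poly P (norm x)" "\<forall>x. norm (grad W x) \<le> poly P (norm x)" by auto
  qed
  have Vc: "continuous_on UNIV V"
    using dV1 by (intro differentiable_imp_continuous_on) (simp add: differentiable_at_imp_differentiable_on)
  have Wc: "continuous_on UNIV W"
    using dW1 by (intro differentiable_imp_continuous_on) (simp add: differentiable_at_imp_differentiable_on)
  have Vm[measurable]: "V \<in> borel_measurable borel" using Vc by (rule borel_measurable_continuous_onI)
  define d where "d = DIM('a)"
  define CP :: real where "CP = 2 ^ d * exp 1 + 1"
  have main: "shift_measure (PiM V W \<sigma> \<mu>) c \<in> K0 1 CP"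
    if sig: "0 < \<sigma>" "\<sigma> \<le> sqrt \<rho>" and mu: "\<mu> \<in> PP P" and crit: "grad V c + grad_conv W \<mu> c = 0"
    for \<sigma> \<mu> c
  proof -
    have s2: "\<sigma>\<^sup>2 \<le> \<rho>"
    proof -
      have "\<sigma>\<^sup>2 \<le> (sqrt \<rho>)\<^sup>2" using sig by (intro power_mono) auto
      then show ?thesis using rho by simp
    qed
    have s2p: "\<sigma>\<^sup>2 > 0" using sig by simp
    have kappa: "\<rho> / \<sigma>\<^sup>2 \<ge> 1" using s2 s2p by simp
    have convm[measurable]: "conv W \<mu> \<in> borel_measurable borel" by (rule conv_measurable[OF mu Wc])
    define U where "U x = V x + conv W \<mu> x" for x
    define F where "F = gibbs_weight V W \<sigma> \<mu>"
    have F_eq: "F x = exp (- 2 * U x / \<sigma>\<^sup>2)" for x by (simp add: F_def gibbs_weight_def U_def)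
    have Fm[measurable]: "F \<in> borel_measurable borel"
      unfolding F_def gibbs_weight_def[abs_def] by measurable
    have Fpos: "F x > 0" for x by (simp add: F_eq)
    note CV = convex_ineqs[OF dV1 dV2 hessV]
    note CW = conv_ineqs[OF mu P1 dW1 dW2 hessW less_imp_le[OF alpha] WbA gWb]
    have critz: "grad V c \<bullet> z + grad_conv W \<mu> c \<bullet> z = 0" for z
      using crit by (metis inner_add_left inner_zero_left)
    have U1: "U (c + z) \<ge> U c + \<rho>/2 * (norm z)\<^sup>2" for z
      using CV(1)[of c z] CW(1)[of c z] critz[of z] by (simp add: U_def)
    have U2: "U (c + 2 *\<^sub>R z) - U (c + z) \<ge> 3/2 * \<rho> * (norm z)\<^sup>2" for z
      using CV(2)[of c z] CW(2)[of c z] critz[of z] by (simp add: U_def)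
    have kz: "\<rho> * (norm z)\<^sup>2 / \<sigma>\<^sup>2 \<ge> (norm z)\<^sup>2" for z
    proof -
      have "(norm z)\<^sup>2 * 1 \<le> (norm z)\<^sup>2 * (\<rho> / \<sigma>\<^sup>2)" using kappa by (intro mult_left_mono) auto
      then show ?thesis by (simp add: mult.commute)
    qed
    have F1: "F (c + z) \<le> F c * exp (- (norm z)\<^sup>2 / 2)" for z
    proof -
      have "(2 * U c + \<rho> * (norm z)\<^sup>2) / \<sigma>\<^sup>2 \<le> 2 * U (c + z) / \<sigma>\<^sup>2"
        using U1[of z] s2p by (intro divide_right_mono) auto
      then have "2 * U c / \<sigma>\<^sup>2 + \<rho> * (norm z)\<^sup>2 / \<sigma>\<^sup>2 \<le> 2 * U (c + z) / \<sigma>\<^sup>2"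
        by (simp add: add_divide_distrib)
      then have "- 2 * U (c + z) / \<sigma>\<^sup>2 \<le> - 2 * U c / \<sigma>\<^sup>2 + - (norm z)\<^sup>2 / 2"
        using kz[of z] zero_le_power2[of "norm z"] by (simp; linarith)
      then have "exp (- 2 * U (c + z) / \<sigma>\<^sup>2) \<le> exp (- 2 * U c / \<sigma>\<^sup>2 + - (norm z)\<^sup>2 / 2)" by simp
      then show ?thesis by (simp only: F_eq exp_add[symmetric])
    qed
    have F2: "F (c + 2 *\<^sub>R z) \<le> F (c + z) * exp (- 3 * (norm z)\<^sup>2)" for z
    proof -
      have "(2 * U (c + z) + 3 * (\<rho> * (norm z)\<^sup>2)) / \<sigma>\<^sup>2 \<le> 2 * U (c + 2 *\<^sub>R z) / \<sigma>\<^sup>2"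
        using U2[of z] s2p by (intro divide_right_mono) auto
      then have "2 * U (c + z) / \<sigma>\<^sup>2 + 3 * (\<rho> * (norm z)\<^sup>2 / \<sigma>\<^sup>2) \<le> 2 * U (c + 2 *\<^sub>R z) / \<sigma>\<^sup>2"
        by (simp add: add_divide_distrib)
      then have "- 2 * U (c + 2 *\<^sub>R z) / \<sigma>\<^sup>2 \<le> - 2 * U (c + z) / \<sigma>\<^sup>2 + - 3 * (norm z)\<^sup>2"
        using kz[of z] by simp
      then have "exp (- 2 * U (c + 2 *\<^sub>R z) / \<sigma>\<^sup>2) \<le> exp (- 2 * U (c + z) / \<sigma>\<^sup>2 + - 3 * (norm z)\<^sup>2)" by simp
      then show ?thesis by (simp only: F_eq exp_add[symmetric])
    qed
    have iF: "integrable lborel F"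
    proof (rule Bochner_Integration.integrable_bound[of lborel "\<lambda>x. F c * exp (- (norm (x - c))\<^sup>2 / 2)" F])
      show "integrable lborel (\<lambda>x. F c * exp (- (norm (x - c))\<^sup>2 / 2))"
        using integrable_translate[OF gauss_integrable, of c] by simp
      show "F \<in> borel_measurable lborel" by simp
      show "AE x in lborel. norm (F x) \<le> norm (F c * exp (- (norm (x - c))\<^sup>2 / 2))"
      proof (rule AE_I2)
        fix x
        have "F x \<le> F c * exp (- (norm (x - c))\<^sup>2 / 2)" using F1[of "x - c"] by simp
        then show "norm (F x) \<le> norm (F c * exp (- (norm (x - c))\<^sup>2 / 2))"
          using Fpos[of x] Fpos[of c] by simp
      qed
    qed
    define Z where "Z = Zpart V W \<sigma> \<mu>"
    have Z_eq: "Z = (\<integral>x. F x \<partial>lborel)" by (simp add: Z_def Zpart_def F_def)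
    have Zpos: "Z > 0"
    proof -
      have "Z \<ge> 0" unfolding Z_eq using Fpos by (intro Bochner_Integration.integral_nonneg) (auto intro: less_imp_le)
      moreover have "Z \<noteq> 0"
      proof
        assume "Z = 0"
        then have "AE x in lborel. F x = 0"
          using integral_nonneg_eq_0_iff_AE[OF iF] Fpos unfolding Z_eq by (auto intro: less_imp_le)
        then have "AE x in (lborel::'a measure). False" using Fpos by (auto elim: AE_mp simp: less_le)
        then have "ae_filter (lborel::'a measure) = bot" by (simp add: eventually_False)
        then show False by (simp add: ae_filter_eq_bot_iff)
      qed
      ultimately show ?thesis by simp
    qed
    define M where "M = density lborel (\<lambda>x. ennreal (F x / Z))"
    have PiM_eq: "PiM V W \<sigma> \<mu> = M" by (simp add: M_def PiM_def F_def Z_def)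
    have nnM: "(\<integral>\<^sup>+x. ennreal (F x / Z) \<partial>lborel) = 1"
    proof -
      have "(\<integral>\<^sup>+x. ennreal (F x / Z) \<partial>lborel) = ennreal (\<integral>x. F x / Z \<partial>lborel)"
        using iF Fpos Zpos by (intro nn_integral_eq_integral) (auto intro!: AE_I2 divide_nonneg_pos less_imp_le)
      also have "\<dots> = 1" using Zpos by (simp add: Z_eq[symmetric])
      finally show ?thesis .
    qed
    have setsM: "sets M = sets borel" by (simp add: M_def)
    have spaceM: "space M = UNIV" by (simp add: M_def)
    have probM: "prob_space M"
    proof (rule prob_spaceI)
      show "emeasure M (space M) = 1"
        unfolding spaceM M_def by (subst emeasure_density) (auto simp: nnM)
    qed
    have shm: "(\<lambda>x. x - c) \<in> measurable M borel"
      by (subst measurable_cong_sets[OF setsM refl]) measurable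
    define \<nu> where "\<nu> = distr M borel (\<lambda>x. x - c)"
    have nu_eq: "shift_measure (PiM V W \<sigma> \<mu>) c = \<nu>" by (simp add: shift_measure_def PiM_eq \<nu>_def)
    have probnu: "prob_space \<nu>" unfolding \<nu>_def by (rule prob_space.prob_space_distr[OF probM shm])
    have setsnu: "sets \<nu> = sets borel" by (simp add: \<nu>_def)
    have tail: "measure \<nu> {y. norm y > R} < CP * exp (- 1 * R)" if R: "R > 0" for R
    proof -
      define A where "A = {x::'a. R < norm (x - c)}"
      have S_meas: "{y::'a. R < norm y} \<in> sets borel"
        by (intro borel_open open_Collect_less continuous_intros)
      have A_meas[measurable]: "A \<in> sets borel" unfolding A_def
        by (intro borel_open open_Collect_less continuous_intros)
      have "measure \<nu> {y. norm y > R} = measure M A"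
        unfolding \<nu>_def by (subst measure_distr[OF shm S_meas]) (simp add: spaceM A_def)
      have "emeasure M A = (\<integral>\<^sup>+x. ennreal (F x / Z) * indicator A x \<partial>lborel)"
        unfolding M_def by (subst emeasure_density) auto
      also have "\<dots> = ennreal (2 ^ DIM('a)) * (\<integral>\<^sup>+z. ennreal (F (c + 2 *\<^sub>R z) / Z) * indicator A (c + 2 *\<^sub>R z) \<partial>lborel)"
        by (rule nn_integral_scale2) measurable
      also have "\<dots> \<le> ennreal (2 ^ DIM('a)) * (\<integral>\<^sup>+z. ennreal (exp (- 3 * R\<^sup>2 / 4)) * ennreal (F (c + z) / Z) \<partial>lborel)"
      proof (intro mult_left_mono nn_integral_mono)
        fix z :: 'a
        show "ennreal (F (c + 2 *\<^sub>R z) / Z) * indicator A (c + 2 *\<^sub>R z) \<le> ennreal (exp (- 3 * R\<^sup>2 / 4)) * ennreal (F (c + z) / Z)"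
        proof (cases "c + 2 *\<^sub>R z \<in> A")
          case True
          then have "R < 2 * norm z" by (simp add: A_def)
          then have "R\<^sup>2 < (2 * norm z)\<^sup>2" using R by (intro power_strict_mono) auto
          then have "R\<^sup>2 / 4 < (norm z)\<^sup>2" by (simp add: power_mult_distrib)
          then have "exp (- 3 * (norm z)\<^sup>2) \<le> exp (- 3 * R\<^sup>2 / 4)" by simp
          then have "F (c + 2 *\<^sub>R z) \<le> exp (- 3 * R\<^sup>2 / 4) * F (c + z)"
            using F2[of z] Fpos[of "c + z"] by (smt (verit) mult_left_mono mult.commute)
          then have "F (c + 2 *\<^sub>R z) / Z \<le> exp (- 3 * R\<^sup>2 / 4) * (F (c + z) / Z)"
            using Zpos by (simp add: divide_right_mono)
          then show ?thesis using True Fpos Zpos by (simp add: ennreal_mult'[symmetric] ennreal_leI)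
        qed simp
      qed simp
      also have "\<dots> = ennreal (2 ^ DIM('a)) * (ennreal (exp (- 3 * R\<^sup>2 / 4)) * (\<integral>\<^sup>+z. ennreal (F (c + z) / Z) \<partial>lborel))"
        by (subst nn_integral_cmult) auto
      also have "(\<integral>\<^sup>+z. ennreal (F (c + z) / Z) \<partial>lborel) = 1"
        using nn_integral_translate[of "\<lambda>x. ennreal (F x / Z)" c] nnM by simp
      finally have "emeasure M A \<le> ennreal (2 ^ DIM('a) * exp (- 3 * R\<^sup>2 / 4))"
        by (simp add: ennreal_mult[symmetric])
      moreover have "emeasure M A = ennreal (measure M A)"
        using probM by (simp add: prob_space_def finite_measure.emeasure_eq_measure)
      ultimately have mA: "measure M A \<le> 2 ^ DIM('a) * exp (- 3 * R\<^sup>2 / 4)"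
        by (simp add: ennreal_le_iff)
      have q: "(3 * R - 2)\<^sup>2 = 9 * R\<^sup>2 - 12 * R + 4" by (simp add: power2_eq_square algebra_simps)
      have "0 \<le> (3 * R - 2)\<^sup>2" by simp
      then have "- 3 * R\<^sup>2 / 4 \<le> 1 + - R" using q by linarith
      then have "exp (- 3 * R\<^sup>2 / 4) \<le> exp 1 * exp (- R)" by (simp flip: exp_add)
      then have "2 ^ DIM('a) * exp (- 3 * R\<^sup>2 / 4) \<le> 2 ^ d * exp 1 * exp (- R)"
        by (simp add: d_def)
      also have "\<dots> < CP * exp (- 1 * R)" by (simp add: CP_def distrib_right)
      finally show ?thesis using mA \<open>measure \<nu> {y. norm y > R} = measure M A\<close> by simp
    qed
    show ?thesis unfolding nu_eq K0_def using probnu setsnu tail by auto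
  qed
  have CP: "CP > 0" by (simp add: CP_def add_pos_nonneg)
  show ?thesis
    apply (rule exI[of _ "sqrt \<rho>"])
    apply (intro conjI)
    using rho apply simp
    apply (rule exI[of _ 1])
    apply (intro conjI)
     apply simp
    apply (rule exI[of _ CP])
    apply (intro conjI CP)
    using main by blast
qed


end
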